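(* For every $n,m\in\mathbb N^*$, Hermitian $H_0,\dots,H_m\in\mathbb H_n$ and $h_1,\dots,h_m\in\mathbb R$: for every feasible point $X$ of SDP-$\mathbb R$ there exists a feasible point $\tilde X$ of SDP-$\mathbb R$ with $\tilde X_{11}=0$ and $\operatorname{Tr}(\Lambda(H_i)\tilde X)=\operatorname{Tr}(\Lambda(H_i)X)$ for all $i=0,\dots,m$. In particular, adding the constraint $X_{11}=0$ to SDP-$\mathbb R$ does not change its optimal value.
   Context: $\mathbb H_n$: Hermitian $n\times n$ matrices; $\mathbb S_{2n}$: real symmetric $2n\times2n$ matrices; $\Lambda(Z):=\begin{pmatrix}\operatorname{Re}Z&-\operatorname{Im}Z\\ \operatorname{Im}Z&\operatorname{Re}Z\end{pmatrix}$. SDP-$\mathbb R$: $\inf_{X\in\mathbb S_{2n}}\operatorname{Tr}(\Lambda(H_0)X)$ s.t. $\operatorname{Tr}(\Lambda(H_i)X)\le h_i$, $i=1,\dots,m$, and $X\succeq0$. *)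

theory Defs
  imports Complex_Main "HOL-Library.Extended_Real" "Jordan_Normal_Form.Matrix"
begin

definition hermitian_mat :: "nat \<Rightarrow> complex mat \<Rightarrow> bool" where
  "hermitian_mat n H \<longleftrightarrow> H \<in> carrier_mat n n \<and>
     (\<forall>i<n. \<forall>j<n. H $$ (i, j) = cnj (H $$ (j, i)))"

definition sym_mat :: "nat \<Rightarrow> real mat \<Rightarrow> bool" where
  "sym_mat k X \<longleftrightarrow> X \<in> carrier_mat k k \<and> transpose_mat X = X"

definition psd_mat :: "nat \<Rightarrow> real mat \<Rightarrow> bool" where
  "psd_mat k X \<longleftrightarrow> sym_mat k X \<and> (\<forall>v \<in> carrier_vec k. v \<bullet> (X *\<^sub>v v) \<ge> 0)"

definition mtrace :: "'a::comm_monoid_add mat \<Rightarrow> 'a" where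
  "mtrace A = (\<Sum>i<dim_row A. A $$ (i, i))"

definition Lam :: "complex mat \<Rightarrow> real mat" where
  "Lam Z = four_block_mat (map_mat Re Z) (map_mat (\<lambda>z. - Im z) Z)
                          (map_mat Im Z) (map_mat Re Z)"

definition sdpR_feasible ::
  "nat \<Rightarrow> nat \<Rightarrow> (nat \<Rightarrow> complex mat) \<Rightarrow> (nat \<Rightarrow> real) \<Rightarrow> real mat \<Rightarrow> bool" where
  "sdpR_feasible n m H h X \<longleftrightarrow> psd_mat (2 * n) X \<and>
     (\<forall>i\<in>{1..m}. mtrace (Lam (H i) * X) \<le> h i)"

end

theory Submission
  imports Defs
begin

lemma qf_mat:
  assumes "M \<in> carrier_mat N N" "v \<in> carrier_vec N"
  shows "v \<bullet> (M *\<^sub>v v) = (\<Sum>i<N. \<Sum>j<N. v$i * M$$(i,j) * v$j)"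
  using assms by (simp add: scalar_prod_def atLeast0LessThan sum_distrib_left mult.assoc mult.left_commute)

lemma tr_mult:
  assumes "A \<in> carrier_mat N N" "B \<in> carrier_mat N N"
  shows "mtrace (A*B) = (\<Sum>i<N. \<Sum>k<N. A$$(i,k) * B$$(k,i))"
  using assms by (simp add: mtrace_def scalar_prod_def atLeast0LessThan)

lemma Lam_carrier: "H \<in> carrier_mat n n \<Longrightarrow> Lam H \<in> carrier_mat (2*n) (2*n)"
  unfolding Lam_def mult_2 by (rule four_block_carrier_mat) auto

lemma Lam_idx:
  assumes "H \<in> carrier_mat n n" "i < 2*n" "k < 2*n"
  shows "Lam H $$ (i,k) = (if i<n then (if k<n then Re (H$$(i,k)) else - Im (H$$(i,k-n)))
      else (if k<n then Im (H$$(i-n,k)) else Re (H$$(i-n,k-n))))"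
  using assms unfolding Lam_def by auto

definition sg :: "nat \<Rightarrow> nat \<Rightarrow> real" where "sg n i = (if i < n then -1 else 1)"
definition sw :: "nat \<Rightarrow> nat \<Rightarrow> nat" where "sw n i = (if i < n then i + n else i - n)"

lemma sw_lt: "i < 2*n \<Longrightarrow> sw n i < 2*n" by (auto simp: sw_def)
lemma sw_sw: "i < 2*n \<Longrightarrow> sw n (sw n i) = i" by (auto simp: sw_def)
lemma sg_sq: "sg n i * sg n i = 1" by (auto simp: sg_def)
lemma sg_sw: "i < 2*n \<Longrightarrow> sg n (sw n i) = - sg n i" by (auto simp: sg_def sw_def)

lemma sw_bij: "bij_betw (sw n) {..<2*n} {..<2*n}"
  by (rule bij_betwI[where g="sw n"]) (auto simp: sw_lt sw_sw)

lemma reindex2: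
  "(\<Sum>i<2*n. \<Sum>k<2*n. f (sw n i) (sw n k)) = (\<Sum>i<2*n. \<Sum>k<2*n. (f i k::real))"
proof -
  have "(\<Sum>i<2*n. \<Sum>k<2*n. f (sw n i) (sw n k)) = (\<Sum>i<2*n. \<Sum>k<2*n. f (sw n i) k)"
    by (rule sum.cong[OF refl], rule sum.reindex_bij_betw[OF sw_bij])
  also have "\<dots> = (\<Sum>i<2*n. \<Sum>k<2*n. f i k)"
    by (rule sum.reindex_bij_betw[OF sw_bij, where g="\<lambda>i. \<Sum>k<2*n. f i k"])
  finally show ?thesis .
qed

lemma Lam_sw:
  assumes "H \<in> carrier_mat n n" "i < 2*n" "k < 2*n"
  shows "Lam H $$ (sw n i, sw n k) * sg n i * sg n k = Lam H $$ (i,k)"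
  using assms sw_lt[OF assms(2)] sw_lt[OF assms(3)]
  by (simp add: Lam_idx) (auto simp: sw_def sg_def)

lemma reindex1:
  "(\<Sum>i<2*n. f (sw n i)) = (\<Sum>i<2*n. (f i::real))"
  by (rule sum.reindex_bij_betw[OF sw_bij])

lemma cs_form:
  fixes M :: "nat \<Rightarrow> nat \<Rightarrow> real"
  assumes N: "0 < N" and sym: "\<And>i j. i<N \<Longrightarrow> j<N \<Longrightarrow> M i j = M j i"
    and psd: "\<And>v. 0 \<le> (\<Sum>i<N. \<Sum>j<N. v i * M i j * v j)"
  shows "(\<Sum>j<N. M j 0 * v j)^2 \<le> M 0 0 * (\<Sum>i<N. \<Sum>j<N. v i * M i j * v j)"
proof -
  define Q where "Q = (\<Sum>i<N. \<Sum>j<N. v i * M i j * v j)"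
  define c where "c = (\<Sum>j<N. M j 0 * v j)"
  define a where "a = M 0 0"
  define d where "d = (\<lambda>i::nat. if i = 0 then 1 else (0::real))"
  have in3: "(\<Sum>j<N. M i j * d j) = M i 0" for i
  proof -
    have "(\<Sum>j<N. M i j * d j) = (\<Sum>j<N. if j = 0 then M i j else 0)"
      by (rule sum.cong) (auto simp: d_def)
    then show ?thesis using N by simp
  qed
  have "(\<Sum>i<N. \<Sum>j<N. d i * M i j * d j) = (\<Sum>i<N. if i = 0 then M i 0 else 0)"
  proof (intro sum.cong refl)
    fix i
    have "(\<Sum>j<N. d i * M i j * d j) = d i * (\<Sum>j<N. M i j * d j)"
      by (simp add: sum_distrib_left mult.assoc)
    also have "\<dots> = d i * M i 0" by (simp only: in3)
    finally show "(\<Sum>j<N. d i * M i j * d j) = (if i = 0 then M i 0 else 0)" by (simp add: d_def)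
  qed
  then have s3: "(\<Sum>i<N. \<Sum>j<N. d i * M i j * d j) = a" using N by (simp add: a_def)
  have exp: "(\<Sum>i<N. \<Sum>j<N. (v i + t * d i) * M i j * (v j + t * d j)) = Q + 2*t*c + t^2 * a" for t
  proof -
    have e: "(v i + t * d i) * M i j * (v j + t * d j) = v i * M i j * v j + t * (d i * M i j * v j)
       + t * (v i * M i j * d j) + t^2 * (d i * M i j * d j)" for i j
      by (simp add: algebra_simps power2_eq_square)
    have "(\<Sum>i<N. \<Sum>j<N. d i * M i j * v j) = (\<Sum>i<N. if i = 0 then (\<Sum>j<N. M i j * v j) else 0)"
      by (rule sum.cong) (auto simp: d_def)
    also have "\<dots> = (\<Sum>j<N. M 0 j * v j)" using N by simp
    also have "\<dots> = c" unfolding c_def using N by (intro sum.cong) (auto simp: sym)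
    finally have s1: "(\<Sum>i<N. \<Sum>j<N. d i * M i j * v j) = c" .
    have "(\<Sum>i<N. \<Sum>j<N. v i * M i j * d j) = (\<Sum>i<N. v i * M i 0)"
    proof (rule sum.cong[OF refl])
      fix i assume "i \<in> {..<N}"
      have "(\<Sum>j<N. v i * M i j * d j) = (\<Sum>j<N. if j = 0 then v i * M i j else 0)"
        by (rule sum.cong) (auto simp: d_def)
      also have "\<dots> = v i * M i 0" using N by simp
      finally show "(\<Sum>j<N. v i * M i j * d j) = v i * M i 0" .
    qed
    also have "\<dots> = c" unfolding c_def by (simp add: mult.commute)
    finally have s2: "(\<Sum>i<N. \<Sum>j<N. v i * M i j * d j) = c" .
    have "(\<Sum>i<N. \<Sum>j<N. (v i + t * d i) * M i j * (v j + t * d j)) =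
      (\<Sum>i<N. \<Sum>j<N. v i * M i j * v j) + t * (\<Sum>i<N. \<Sum>j<N. d i * M i j * v j)
       + t * (\<Sum>i<N. \<Sum>j<N. v i * M i j * d j) + t^2 * (\<Sum>i<N. \<Sum>j<N. d i * M i j * d j)"
      unfolding e by (simp add: sum.distrib sum_distrib_left)
    then show ?thesis using s1 s2 s3 Q_def by simp
  qed
  have pos: "0 \<le> Q + 2*t*c + t^2 * a" for t
    using psd[of "\<lambda>i. v i + t * d i"] exp by simp
  have a0: "0 \<le> a" using psd[of d] s3 by simp
  have "c^2 \<le> a * Q"
  proof (cases "a = 0")
    case True
    show ?thesis
    proof (rule ccontr)
      assume "\<not> ?thesis"
      then have "c \<noteq> 0" using True by simp
      then have "2 * (-(Q+1)/(2*c)) * c = -(Q+1)" by (simp add: field_simps)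
      then show False using pos[of "-(Q+1)/(2*c)"] True by simp
    qed
  next
    case False
    then have ap: "a > 0" using a0 by simp
    have "0 \<le> Q + 2*(-c/a)*c + (-c/a)^2 * a" by (rule pos)
    also have "\<dots> = Q - c^2/a" using ap by (simp add: field_simps power2_eq_square)
    finally show ?thesis using ap by (simp add: field_simps)
  qed
  then show ?thesis by (simp add: a_def c_def Q_def)
qed

lemma psd_form:
  assumes "psd_mat N X"
  shows "0 \<le> (\<Sum>i<N. \<Sum>j<N. v i * X$$(i,j) * v j)"
proof -
  have c: "X \<in> carrier_mat N N" using assms by (simp add: psd_mat_def sym_mat_def)
  have "0 \<le> vec N v \<bullet> (X *\<^sub>v vec N v)" using assms by (simp add: psd_mat_def)
  also have "\<dots> = (\<Sum>i<N. \<Sum>j<N. v i * X$$(i,j) * v j)"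
    by (subst qf_mat[OF c]) auto
  finally show ?thesis .
qed

lemma form_psd:
  assumes c: "Y \<in> carrier_mat N N" and "transpose_mat Y = Y"
    and f: "\<And>v. 0 \<le> (\<Sum>i<N. \<Sum>j<N. v i * Y$$(i,j) * v j)"
  shows "psd_mat N Y"
  unfolding psd_mat_def sym_mat_def
proof (intro conjI ballI)
  fix v :: "real vec" assume "v \<in> carrier_vec N"
  then show "0 \<le> v \<bullet> (Y *\<^sub>v v)" using f[of "\<lambda>i. v$i"] by (simp add: qf_mat[OF c])
qed (use assms in auto)

lemma psd_sym:
  assumes "psd_mat N X" "i < N" "j < N"
  shows "X$$(i,j) = X$$(j,i)"
proof -
  have "transpose_mat X = X" "X \<in> carrier_mat N N" using assms by (auto simp: psd_mat_def sym_mat_def)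
  then show ?thesis using assms(2,3) by (metis carrier_matD(1,2) index_transpose_mat(1))
qed

lemma sum2_half: "(\<Sum>i<N. \<Sum>j<N. (F i j + G i j)/2) = ((\<Sum>i<N. \<Sum>j<N. F i j) + (\<Sum>i<N. \<Sum>j<N. G i j))/(2::real)"
  by (simp add: sum.distrib sum_divide_distrib[symmetric])
lemma sum2_comb: "(\<Sum>i<N. \<Sum>j<N. F i j + (G i j - K i j)/a) = (\<Sum>i<N. \<Sum>j<N. F i j) + ((\<Sum>i<N. \<Sum>j<N. G i j) - (\<Sum>i<N. \<Sum>j<N. K i j))/(a::real)"
  by (simp add: sum.distrib sum_subtractf sum_divide_distrib[symmetric])

lemma diag_nonneg:
  fixes M :: "nat \<Rightarrow> nat \<Rightarrow> real"
  assumes N: "0 < N" and psd: "\<And>v. 0 \<le> (\<Sum>i<N. \<Sum>j<N. v i * M i j * v j)"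
  shows "0 \<le> M 0 0"
proof -
  define d where "d = (\<lambda>i::nat. if i = 0 then 1 else (0::real))"
  have in3: "(\<Sum>j<N. M i j * d j) = M i 0" for i
  proof -
    have "(\<Sum>j<N. M i j * d j) = (\<Sum>j<N. if j = 0 then M i j else 0)"
      by (rule sum.cong) (auto simp: d_def)
    then show ?thesis using N by simp
  qed
  have "(\<Sum>i<N. \<Sum>j<N. d i * M i j * d j) = (\<Sum>i<N. if i = 0 then M i 0 else 0)"
  proof (intro sum.cong refl)
    fix i
    have "(\<Sum>j<N. d i * M i j * d j) = d i * (\<Sum>j<N. M i j * d j)"
      by (simp add: sum_distrib_left mult.assoc)
    also have "\<dots> = d i * M i 0" by (simp only: in3)
    finally show "(\<Sum>j<N. d i * M i j * d j) = (if i = 0 then M i 0 else 0)" by (simp add: d_def)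
  qed
  then show ?thesis using N psd[of d] by simp
qed

lemma construct:
  assumes n1: "n \<ge> 1" and psdX: "psd_mat (2*n) X"
  shows "\<exists>Y. psd_mat (2*n) Y \<and> Y$$(0,0) = 0 \<and>
     (\<forall>H. H \<in> carrier_mat n n \<longrightarrow> mtrace (Lam H * Y) = mtrace (Lam H * X))"
proof -
  define N where "N = 2*n"
  have N0: "0 < N" using n1 by (simp add: N_def)
  have cX: "X \<in> carrier_mat N N" using psdX by (simp add: psd_mat_def sym_mat_def N_def)
  have symX: "\<And>i j. i<N \<Longrightarrow> j<N \<Longrightarrow> X$$(i,j) = X$$(j,i)" using psd_sym[OF psdX] N_def by auto
  define Pf where "Pf = (\<lambda>i j. (X$$(i,j) + sg n i * sg n j * X$$(sw n i, sw n j))/2)"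
  define a where "a = Pf 0 0"
  define p where "p = (\<lambda>j. Pf j 0)"
  define q where "q = (\<lambda>j. sg n j * p (sw n j))"
  define Yf where "Yf = (\<lambda>i j. Pf i j + (q i * q j - p i * p j)/a)"
  define Y where "Y = mat N N (\<lambda>(i,j). Yf i j)"
  have cY: "Y \<in> carrier_mat N N" by (simp add: Y_def)
  have YI: "\<And>i j. i<N \<Longrightarrow> j<N \<Longrightarrow> Y$$(i,j) = Yf i j" by (simp add: Y_def)
  have swN: "\<And>i. i<N \<Longrightarrow> sw n i < N" using sw_lt N_def by auto
  have symP: "\<And>i j. i<N \<Longrightarrow> j<N \<Longrightarrow> Pf i j = Pf j i"
    unfolding Pf_def using symX swN by (simp add: mult.commute)
  have symY: "\<And>i j. i<N \<Longrightarrow> j<N \<Longrightarrow> Yf i j = Yf j i"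
    unfolding Yf_def using symP by (simp add: mult.commute)
  have tY: "transpose_mat Y = Y"
    by (rule eq_matI) (auto simp: Y_def symY)
  have QP: "0 \<le> (\<Sum>i<N. \<Sum>j<N. v i * Pf i j * v j)" for v
  proof -
    define w where "w = (\<lambda>k. sg n (sw n k) * v (sw n k))"
    have "(\<Sum>i<N. \<Sum>j<N. v i * (sg n i * sg n j * X$$(sw n i, sw n j)) * v j)
       = (\<Sum>i<N. \<Sum>j<N. w (sw n i) * X$$(sw n i, sw n j) * w (sw n j))"
      by (intro sum.cong refl) (simp add: w_def sw_sw N_def)
    also have "\<dots> = (\<Sum>i<N. \<Sum>j<N. w i * X$$(i, j) * w j)"
      unfolding N_def by (rule reindex2[where f="\<lambda>i j. w i * X$$(i, j) * w j"])
    finally have e: "(\<Sum>i<N. \<Sum>j<N. v i * (sg n i * sg n j * X$$(sw n i, sw n j)) * v j)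
       = (\<Sum>i<N. \<Sum>j<N. w i * X$$(i, j) * w j)" .
    have "(\<Sum>i<N. \<Sum>j<N. v i * Pf i j * v j) =
       ((\<Sum>i<N. \<Sum>j<N. v i * X$$(i,j) * v j) +
        (\<Sum>i<N. \<Sum>j<N. v i * (sg n i * sg n j * X$$(sw n i, sw n j)) * v j)) / 2"
      unfolding sum2_half[symmetric] by (intro sum.cong refl) (simp add: Pf_def field_simps)
    also have "\<dots> \<ge> 0" unfolding e using psd_form[OF psdX, of v] psd_form[OF psdX, of w]
      by (simp add: N_def)
    finally show ?thesis .
  qed
  have q0: "q 0 = 0"
    using symX[of n 0] n1 unfolding q_def p_def Pf_def by (simp add: sw_def sg_def N_def)
  have p0: "p 0 = a" by (simp add: p_def a_def)
  have Y00: "Y$$(0,0) = 0"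
    using YI[OF N0 N0] q0 p0 by (simp add: Yf_def a_def power2_eq_square[symmetric])
  have psdY: "psd_mat N Y"
  proof (rule form_psd[OF cY tY])
    fix v :: "nat \<Rightarrow> real"
    define cp where "cp = (\<Sum>j<N. p j * v j)"
    define cq where "cq = (\<Sum>j<N. q j * v j)"
    have r1: "(\<Sum>i<N. \<Sum>j<N. v i * (f i * f j) * v j) = (\<Sum>j<N. f j * v j)^2" for f :: "nat \<Rightarrow> real"
      by (simp add: power2_eq_square sum_product algebra_simps)
    have "(\<Sum>i<N. \<Sum>j<N. v i * Y$$(i,j) * v j) = (\<Sum>i<N. \<Sum>j<N. v i * Yf i j * v j)"
      by (intro sum.cong refl) (simp add: YI)
    also have "\<dots> = (\<Sum>i<N. \<Sum>j<N. v i * Pf i j * v j) +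
       ((\<Sum>i<N. \<Sum>j<N. v i * (q i * q j) * v j) - (\<Sum>i<N. \<Sum>j<N. v i * (p i * p j) * v j)) / a"
      unfolding sum2_comb[symmetric] by (intro sum.cong refl) (simp add: Yf_def field_simps)
    also have "\<dots> = (\<Sum>i<N. \<Sum>j<N. v i * Pf i j * v j) + (cq^2 - cp^2)/a"
      unfolding r1 cp_def cq_def by simp
    finally have eq: "(\<Sum>i<N. \<Sum>j<N. v i * Y$$(i,j) * v j) = (\<Sum>i<N. \<Sum>j<N. v i * Pf i j * v j) + (cq^2 - cp^2)/a" .
    have cs: "cp^2 \<le> a * (\<Sum>i<N. \<Sum>j<N. v i * Pf i j * v j)"
      using cs_form[of N Pf v, OF N0 symP QP] unfolding cp_def p_def a_def by simp
    have a0: "0 \<le> a" using cs_form[of N Pf v, OF N0 symP QP] unfolding a_def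
      using diag_nonneg[OF N0 QP] by simp
    show "0 \<le> (\<Sum>i<N. \<Sum>j<N. v i * Y$$(i,j) * v j)"
    proof (cases "a = 0")
      case True then show ?thesis using eq QP[of v] by simp
    next
      case False
      then have ap: "0 < a" using a0 by simp
      have "cp^2 / a \<le> (\<Sum>i<N. \<Sum>j<N. v i * Pf i j * v j)" using cs ap by (simp add: field_simps)
      moreover have "0 \<le> cq^2/a" using ap by simp
      ultimately show ?thesis unfolding eq by (simp add: diff_divide_distrib)
    qed
  qed
  have tr: "mtrace (Lam H * Y) = mtrace (Lam H * X)" if cH: "H \<in> carrier_mat n n" for H
  proof -
    define L where "L = (\<lambda>i k. Lam H $$ (i,k))"
    have cL: "Lam H \<in> carrier_mat N N" using Lam_carrier[OF cH] by (simp add: N_def)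
    have Lsw: "\<And>i k. i<N \<Longrightarrow> k<N \<Longrightarrow> L (sw n i) (sw n k) * sg n i * sg n k = L i k"
      unfolding L_def using Lam_sw[OF cH] N_def by auto
    have Lsw2: "\<And>i k. i<N \<Longrightarrow> k<N \<Longrightarrow> L i k * (sg n k * sg n i) = L (sw n i) (sw n k)"
    proof -
      fix i k assume "i<N" "k<N"
      then have "L i k * (sg n k * sg n i) = L (sw n i) (sw n k) * (sg n i * sg n i) * (sg n k * sg n k)"
        using Lsw[of i k] by (simp add: algebra_simps)
      then show "L i k * (sg n k * sg n i) = L (sw n i) (sw n k)" by (simp add: sg_sq)
    qed
    have A: "(\<Sum>i<N. \<Sum>k<N. L i k * (sg n k * sg n i * X$$(sw n k, sw n i))) = (\<Sum>i<N. \<Sum>k<N. L i k * X$$(k,i))"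
    proof -
      have "(\<Sum>i<N. \<Sum>k<N. L i k * (sg n k * sg n i * X$$(sw n k, sw n i)))
          = (\<Sum>i<N. \<Sum>k<N. L (sw n i) (sw n k) * X$$(sw n k, sw n i))"
        by (intro sum.cong refl) (simp add: Lsw2[symmetric] mult.assoc)
      also have "\<dots> = (\<Sum>i<N. \<Sum>k<N. L i k * X$$(k,i))"
        unfolding N_def by (rule reindex2[where f="\<lambda>i k. L i k * X$$(k,i)"])
      finally show ?thesis .
    qed
    have B: "(\<Sum>i<N. \<Sum>k<N. L i k * (q k * q i)) = (\<Sum>i<N. \<Sum>k<N. L i k * (p k * p i))"
    proof -
      have "(\<Sum>i<N. \<Sum>k<N. L i k * (q k * q i))
          = (\<Sum>i<N. \<Sum>k<N. L (sw n i) (sw n k) * (p (sw n k) * p (sw n i)))"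
        by (intro sum.cong refl) (simp add: q_def Lsw2[symmetric] algebra_simps)
      also have "\<dots> = (\<Sum>i<N. \<Sum>k<N. L i k * (p k * p i))"
        unfolding N_def by (rule reindex2[where f="\<lambda>i k. L i k * (p k * p i)"])
      finally show ?thesis .
    qed
    have "mtrace (Lam H * Y) = (\<Sum>i<N. \<Sum>k<N. L i k * Yf k i)"
      unfolding tr_mult[OF cL cY] L_def by (intro sum.cong refl) (simp add: YI)
    also have "\<dots> = ((\<Sum>i<N. \<Sum>k<N. L i k * X$$(k,i)) + (\<Sum>i<N. \<Sum>k<N. L i k * (sg n k * sg n i * X$$(sw n k, sw n i))))/2
        + ((\<Sum>i<N. \<Sum>k<N. L i k * (q k * q i)) - (\<Sum>i<N. \<Sum>k<N. L i k * (p k * p i)))/a"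
      unfolding sum2_comb[symmetric] sum2_half[symmetric] by (intro sum.cong refl) (simp add: Yf_def Pf_def field_simps)
    also have "\<dots> = (\<Sum>i<N. \<Sum>k<N. L i k * X$$(k,i))" unfolding A B by simp
    also have "\<dots> = mtrace (Lam H * X)"
      unfolding tr_mult[OF cL cX] L_def ..
    finally show ?thesis .
  qed
  show ?thesis using psdY Y00 tr unfolding N_def by blast
qed

theorem mainTheorem18:
  fixes n m :: nat and H :: "nat \<Rightarrow> complex mat" and h :: "nat \<Rightarrow> real"
  assumes "n \<ge> 1" and "m \<ge> 1"
    and "\<forall>i\<le>m. hermitian_mat n (H i)"
  shows "(\<forall>X. sdpR_feasible n m H h X \<longrightarrow>
            (\<exists>Y. sdpR_feasible n m H h Y \<and> Y $$ (0, 0) = 0 \<and>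
                 (\<forall>i\<le>m. mtrace (Lam (H i) * Y) = mtrace (Lam (H i) * X))))
       \<and> (INF X \<in> {X. sdpR_feasible n m H h X}. ereal (mtrace (Lam (H 0) * X)))
         = (INF X \<in> {X. sdpR_feasible n m H h X \<and> X $$ (0, 0) = 0}.
              ereal (mtrace (Lam (H 0) * X)))"
proof -
  have cH: "\<And>i. i \<le> m \<Longrightarrow> H i \<in> carrier_mat n n"
    using assms(3) by (simp add: hermitian_mat_def)
  have P1: "\<forall>X. sdpR_feasible n m H h X \<longrightarrow>
            (\<exists>Y. sdpR_feasible n m H h Y \<and> Y $$ (0, 0) = 0 \<and>
                 (\<forall>i\<le>m. mtrace (Lam (H i) * Y) = mtrace (Lam (H i) * X)))"
  proof (intro allI impI)
    fix X assume F: "sdpR_feasible n m H h X"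
    then have "psd_mat (2*n) X" by (simp add: sdpR_feasible_def)
    from construct[OF assms(1) this] obtain Y where Y: "psd_mat (2*n) Y" "Y$$(0,0) = 0"
      "\<And>K. K \<in> carrier_mat n n \<Longrightarrow> mtrace (Lam K * Y) = mtrace (Lam K * X)" by blast
    have tr: "\<forall>i\<le>m. mtrace (Lam (H i) * Y) = mtrace (Lam (H i) * X)" using Y(3) cH by simp
    have "sdpR_feasible n m H h Y" using F Y(1) tr by (auto simp: sdpR_feasible_def)
    then show "\<exists>Y. sdpR_feasible n m H h Y \<and> Y $$ (0, 0) = 0 \<and>
                 (\<forall>i\<le>m. mtrace (Lam (H i) * Y) = mtrace (Lam (H i) * X))" using Y(2) tr by blast
  qed
  have "(INF X \<in> {X. sdpR_feasible n m H h X}. ereal (mtrace (Lam (H 0) * X)))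
         = (INF X \<in> {X. sdpR_feasible n m H h X \<and> X $$ (0, 0) = 0}.
              ereal (mtrace (Lam (H 0) * X)))" (is "?A = ?B")
  proof (rule antisym)
    show "?A \<le> ?B" by (rule INF_superset_mono) auto
    show "?B \<le> ?A"
    proof (rule INF_greatest)
      fix X assume "X \<in> {X. sdpR_feasible n m H h X}"
      then obtain Y where "sdpR_feasible n m H h Y" "Y $$ (0, 0) = 0"
        "mtrace (Lam (H 0) * Y) = mtrace (Lam (H 0) * X)" using P1 by blast
      then show "?B \<le> ereal (mtrace (Lam (H 0) * X))"
        by (metis (mono_tags, lifting) INF_lower mem_Collect_eq)
    qed
  qed
  with P1 show ?thesis by blast
qed

end
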